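(* Consider the one-hop wireless network model described in the context, where the channel powers $\gamma_{i,j}$ are i.i.d. with the Weibull distribution with p.d.f. $f(x)=\frac{k}{\lambda}\left(\frac{x}{\lambda}\right)^{k-1}e^{-(x/\lambda)^k}$ and c.d.f. $F(x)=1-e^{-(x/\lambda)^k}$ for $x\ge0$, with parameters $\lambda>0$ and $k\in(0,0.5)\cup[1,\infty)$. Then, with high probability, the achievable throughput (obtained by activating the source-destination pairs with the largest direct-link powers and silencing the rest) satisfies $T=\Omega\left((\log n)^{1/k}\right)$.
   Context: Network model: $n$ sources $S_1,\dots,S_n$ and $n$ destinations $D_1,\dots,D_n$; $S_i$ wishes to communicate with $D_i$ in one hop. The channel power from $S_i$ to $D_j$ is $\gamma_{i,j}\ge0$; all $\gamma_{i,j}$ are i.i.d. with mean $\mu$. A subset $\mathbb{S}$ of sources is active, each with power $1$; $SINR_i=\frac{\gamma_{i,i}}{N_0+\sum_{S_k\in\mathbb{S},k\ne i}\gamma_{k,i}}$ for $S_i\in\mathbb{S}$ (and $0$ otherwise), with noise variance $N_0\ge0$; $D_i$ succeeds if $SINR_i>\beta$ for a fixed constant $\beta>0$. The throughput $T$ is the number of successful destinations. "With high probability" means with probability tending to $1$ as $n\to\infty$. *)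

theory Defs
  imports "HOL-Probability.Probability"
begin

text \<open>Channel powers of a network realisation: g i j is the power from source i to destination j.
  Sources and destinations are indexed by 0..n-1.\<close>

definition interference :: "(nat \<Rightarrow> nat \<Rightarrow> real) \<Rightarrow> nat set \<Rightarrow> nat \<Rightarrow> real" where
  "interference g S i = (\<Sum>k\<in>S - {i}. g k i)"

text \<open>D_i succeeds iff S_i is active and SINR_i > beta, i.e.
  g i i / (N0 + interference) > beta; written multiplicatively so that a zero
  denominator (N0 = 0, no interferers) is handled as SINR = infinity.\<close>
definition success :: "(nat \<Rightarrow> nat \<Rightarrow> real) \<Rightarrow> real \<Rightarrow> real \<Rightarrow> nat set \<Rightarrow> nat \<Rightarrow> bool" where
  "success g N0 \<beta> S i \<longleftrightarrow> i \<in> S \<and> g i i > \<beta> * (N0 + interference g S i)"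

definition throughput :: "nat \<Rightarrow> (nat \<Rightarrow> nat \<Rightarrow> real) \<Rightarrow> real \<Rightarrow> real \<Rightarrow> nat set \<Rightarrow> nat" where
  "throughput n g N0 \<beta> S = card {i \<in> {..<n}. success g N0 \<beta> S i}"

definition top_set :: "nat \<Rightarrow> (nat \<Rightarrow> nat \<Rightarrow> real) \<Rightarrow> nat \<Rightarrow> nat set \<Rightarrow> bool" where
  "top_set n g m S \<longleftrightarrow> S \<subseteq> {..<n} \<and> card S = m \<and>
     (\<forall>i\<in>S. \<forall>j\<in>{..<n} - S. g j j \<le> g i i)"

definition weibull_cdf :: "real \<Rightarrow> real \<Rightarrow> real \<Rightarrow> real" where
  "weibull_cdf lam k x = (if 0 \<le> x then 1 - exp (- ((x / lam) powr k)) else 0)"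

end

theory Submission
  imports Defs "HOL-Real_Asymp.Real_Asymp"
begin


lemma (in prob_space) var_sum_indep:
  fixes Y :: "'i \<Rightarrow> 'a \<Rightarrow> real"
  assumes "finite I" "indep_vars (\<lambda>_. borel) Y I"
    "\<And>i. i\<in>I \<Longrightarrow> integrable M (\<lambda>\<omega>. (Y i \<omega>)^2)"
  shows "integrable M (\<lambda>\<omega>. (\<Sum>i\<in>I. Y i \<omega>)^2) \<and>
         variance (\<lambda>\<omega>. \<Sum>i\<in>I. Y i \<omega>) = (\<Sum>i\<in>I. variance (Y i))"
  using assms
proof (induction I rule: finite_induct)
  case empty
  then show ?case by simp
next
  case (insert a F)
  have indF: "indep_vars (\<lambda>_. borel) Y F"
    using insert.prems(1) by (rule indep_vars_subset) auto
  have rv: "\<And>i. i \<in> insert a F \<Longrightarrow> random_variable borel (Y i)"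
    using insert.prems(1) by (auto simp: indep_vars_def)
  have IH: "integrable M (\<lambda>\<omega>. (\<Sum>i\<in>F. Y i \<omega>)^2)"
      "variance (\<lambda>\<omega>. \<Sum>i\<in>F. Y i \<omega>) = (\<Sum>i\<in>F. variance (Y i))"
    using insert.IH[OF indF] insert.prems(2) by auto
  define S where "S = (\<lambda>\<omega>. \<Sum>i\<in>F. Y i \<omega>)"
  have Sm: "S \<in> borel_measurable M" unfolding S_def using rv by auto
  have Ym: "Y a \<in> borel_measurable M" using rv by auto
  have S2: "integrable M (\<lambda>\<omega>. (S \<omega>)^2)" using IH unfolding S_def by simp
  have Y2: "integrable M (\<lambda>\<omega>. (Y a \<omega>)^2)" using insert.prems(2) by simp
  have S1: "integrable M S" using square_integrable_imp_integrable[OF Sm S2] .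
  have Y1: "integrable M (Y a)" using square_integrable_imp_integrable[OF Ym Y2] .
  have ind: "indep_var borel (Y a) borel S"
    unfolding S_def using indep_vars_sum[OF insert.hyps(1,2) insert.prems(1)] .
  have YS: "integrable M (\<lambda>\<omega>. Y a \<omega> * S \<omega>)"
    using indep_var_integrable[OF ind Y1 S1] .
  have EYS: "expectation (\<lambda>\<omega>. Y a \<omega> * S \<omega>) = expectation (Y a) * expectation S"
    using indep_var_lebesgue_integral[OF ind Y1 S1] .
  have sumeq: "(\<lambda>\<omega>. \<Sum>i\<in>insert a F. Y i \<omega>) = (\<lambda>\<omega>. Y a \<omega> + S \<omega>)"
    using insert.hyps by (simp add: S_def)
  have sq: "(\<lambda>\<omega>. (Y a \<omega> + S \<omega>)^2) = (\<lambda>\<omega>. (Y a \<omega>)^2 + 2 * (Y a \<omega> * S \<omega>) + (S \<omega>)^2)"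
    by (simp add: power2_sum algebra_simps)
  have int2: "integrable M (\<lambda>\<omega>. (Y a \<omega> + S \<omega>)^2)"
    unfolding sq using Y2 S2 YS by auto
  have "variance (\<lambda>\<omega>. Y a \<omega> + S \<omega>) =
      expectation (\<lambda>\<omega>. (Y a \<omega> + S \<omega>)^2) - (expectation (\<lambda>\<omega>. Y a \<omega> + S \<omega>))^2"
    by (rule variance_eq) (use Y1 S1 int2 in auto)
  also have "\<dots> = (expectation (\<lambda>\<omega>. (Y a \<omega>)^2) - (expectation (Y a))^2)
                 + (expectation (\<lambda>\<omega>. (S \<omega>)^2) - (expectation S)^2)"
  proof -
    have e1: "expectation (\<lambda>\<omega>. (Y a \<omega>)^2 + 2 * (Y a \<omega> * S \<omega>) + (S \<omega>)^2)
        = expectation (\<lambda>\<omega>. (Y a \<omega>)^2) + 2 * expectation (\<lambda>\<omega>. Y a \<omega> * S \<omega>) + expectation (\<lambda>\<omega>. (S \<omega>)^2)"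
      using Y2 S2 YS by simp
    have e2: "expectation (\<lambda>\<omega>. Y a \<omega> + S \<omega>) = expectation (Y a) + expectation S"
      using Y1 S1 by simp
    show ?thesis unfolding sq e1 e2 EYS by (simp add: power2_sum algebra_simps)
  qed
  also have "\<dots> = variance (Y a) + variance S"
    using variance_eq[OF Y1 Y2] variance_eq[OF S1 S2] by simp
  finally show ?case
    using int2 IH(2) insert.hyps unfolding sumeq S_def by simp
qed


lemma (in prob_space) indep_blocks:
  fixes X :: "'i \<Rightarrow> 'a \<Rightarrow> real"
  assumes ind: "indep_vars (\<lambda>_. borel) X I" and K: "\<And>j. j \<in> L \<Longrightarrow> K j \<subseteq> I"
    and disj: "disjoint_family_on K L"
    and h: "\<And>j. j \<in> L \<Longrightarrow> h j \<in> borel_measurable (PiM (K j) (\<lambda>_. borel))"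
  shows "indep_vars (\<lambda>_. borel) (\<lambda>j \<omega>. h j (restrict (\<lambda>i. X i \<omega>) (K j))) L"
  using indep_vars_compose2[OF indep_vars_restrict[OF ind K disj], of h "\<lambda>_. borel"] h by simp

lemma (in prob_space) indep2_prob:
  fixes X :: "'i \<Rightarrow> 'a \<Rightarrow> real"
  assumes ind: "indep_vars (\<lambda>_. borel) X I" and ab: "a \<in> I" "b \<in> I" "a \<noteq> b"
    and AB: "A \<in> sets borel" "B \<in> sets borel"
  shows "prob {\<omega>\<in>space M. X a \<omega> \<in> A \<and> X b \<omega> \<in> B} =
         prob {\<omega>\<in>space M. X a \<omega> \<in> A} * prob {\<omega>\<in>space M. X b \<omega> \<in> B}"
proof -
  let ?A = "\<lambda>i. if i = a then A else B"
  have "prob (\<Inter>i\<in>{a,b}. X i -` ?A i \<inter> space M) = (\<Prod>i\<in>{a,b}. prob (X i -` ?A i \<inter> space M))"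
    by (rule indep_varsD[OF ind]) (use ab AB in auto)
  moreover have "(\<Inter>i\<in>{a,b}. X i -` ?A i \<inter> space M) = {\<omega>\<in>space M. X a \<omega> \<in> A \<and> X b \<omega> \<in> B}"
    using ab by auto
  moreover have "X a -` A \<inter> space M = {\<omega>\<in>space M. X a \<omega> \<in> A}" "X b -` B \<inter> space M = {\<omega>\<in>space M. X b \<omega> \<in> B}"
    by auto
  ultimately show ?thesis using ab by simp
qed

lemma test_meas:
  fixes t :: real and i n :: nat
  shows "(\<lambda>f. \<Sum>k\<in>{..<n}-{i}. (if t < f (k,k) then max 0 (f (k,i)) else 0)) \<in>
     borel_measurable (PiM ({(k,k)|k. k<n \<and> k\<noteq>i} \<union> {(k,i)|k. k<n \<and> k\<noteq>i}) (\<lambda>_. borel))"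
  by measurable




definition qf :: "real \<Rightarrow> real \<Rightarrow> real \<Rightarrow> real" where
  "qf lam k x = exp (- ((x / lam) powr k))"

lemma summable_nu:
  assumes "k > 0" "lam > 0"
  shows "summable (\<lambda>j. (2 * real j + 1) * qf lam k (real j))"
proof -
  have O: "(\<lambda>j::nat. (2*real j+1) * exp(-((real j/lam) powr k))) \<in> O(\<lambda>j. 1/real j^2)"
    using assms by real_asymp
  have s: "summable (\<lambda>j::nat. norm (1/real j^2))"
    using inverse_power_summable[of 2, where 'a=real] by (simp add: field_simps)
  show ?thesis unfolding qf_def
    by (rule summable_comparison_test_bigo[OF s O])
qed


lemma summable_mu:
  assumes "k > 0" "lam > 0"
  shows "summable (\<lambda>j. qf lam k (real j))"
proof (rule summable_comparison_test'[OF summable_nu[OF assms]])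
  fix j :: nat
  show "norm (qf lam k (real j)) \<le> (2 * real j + 1) * qf lam k (real j)"
    by (simp add: qf_def)
qed

lemma sq_bound:
  fixes y :: real
  shows "ennreal ((max 0 y)^2) \<le> (\<Sum>j. ennreal (2*real j+1) * indicator {x. real j < x} y)"
proof (cases "y \<le> 0")
  case True then show ?thesis by simp
next
  case False
  define N where "N = nat \<lceil>y\<rceil>"
  have yN: "y \<le> real N" unfolding N_def by linarith
  have jy: "\<And>j. j < N \<Longrightarrow> real j < y" unfolding N_def by linarith
  have sum_odd: "\<And>N. (\<Sum>j<N. 2 * real j + 1) = real N ^ 2"
    subgoal for N by (induction N) (auto simp: power2_eq_square algebra_simps) done
  have "(max 0 y)^2 \<le> real N ^ 2" using False yN by (intro power_mono) auto
  also have "\<dots> = (\<Sum>j<N. 2 * real j + 1)" by (simp only: sum_odd)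
  finally have "ennreal ((max 0 y)^2) \<le> ennreal (\<Sum>j<N. 2 * real j + 1)" by (rule ennreal_leI)
  also have "\<dots> = (\<Sum>j<N. ennreal (2*real j+1))" by (rule sum_ennreal[symmetric]) simp
  also have "\<dots> = (\<Sum>j<N. ennreal (2*real j+1) * indicator {x. real j < x} y)"
    by (rule sum.cong) (auto simp: jy indicator_def)
  also have "\<dots> \<le> (\<Sum>j. ennreal (2*real j+1) * indicator {x. real j < x} y)"
    by (rule sum_le_suminf[OF summableI]) simp_all
  finally show ?thesis .
qed

lemma lin_bound:
  fixes y :: real
  shows "ennreal (max 0 y) \<le> (\<Sum>j. indicator {x. real j < x} y)"
proof (cases "y \<le> 0")
  case True then show ?thesis by simp
next
  case False
  define N where "N = nat \<lceil>y\<rceil>"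
  have yN: "y \<le> real N" unfolding N_def by linarith
  have jy: "\<And>j. j < N \<Longrightarrow> real j < y" unfolding N_def by linarith
  have "ennreal (max 0 y) \<le> ennreal (real N)" using False yN by (intro ennreal_leI) simp
  also have "\<dots> = (\<Sum>j<N. (1::ennreal))" by (simp add: ennreal_of_nat_eq_real_of_nat)
  also have "\<dots> = (\<Sum>j<N. indicator {x. real j < x} y)"
    by (rule sum.cong) (auto simp: jy indicator_def)
  also have "\<dots> \<le> (\<Sum>j. indicator {x. real j < x} y)"
    by (rule sum_le_suminf[OF summableI]) simp_all
  finally show ?thesis .
qed

lemma (in prob_space) moment_bound:
  fixes f :: "'a \<Rightarrow> real"
  assumes fm: "f \<in> borel_measurable M" and f0: "\<And>\<omega>. 0 \<le> f \<omega>"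
    and E: "\<And>j. E j \<in> events" and w: "\<And>j. 0 \<le> w j"
    and bd: "\<And>\<omega>. \<omega> \<in> space M \<Longrightarrow> ennreal (f \<omega>) \<le> (\<Sum>j. ennreal (w j) * indicator (E j) \<omega>)"
    and sm: "summable (\<lambda>j. w j * prob (E j))"
  shows "integrable M f \<and> expectation f \<le> (\<Sum>j. w j * prob (E j))"
proof -
  have "(\<integral>\<^sup>+\<omega>. ennreal (f \<omega>) \<partial>M) \<le> (\<integral>\<^sup>+\<omega>. (\<Sum>j. ennreal (w j) * indicator (E j) \<omega>) \<partial>M)"
    by (rule nn_integral_mono) (rule bd)
  also have "\<dots> = (\<Sum>j. \<integral>\<^sup>+\<omega>. ennreal (w j) * indicator (E j) \<omega> \<partial>M)"
    by (rule nn_integral_suminf) (use E in measurable)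
  also have "\<dots> = (\<Sum>j. ennreal (w j * prob (E j)))"
    by (rule suminf_cong) (simp add: E nn_integral_cmult_indicator emeasure_eq_measure ennreal_mult w)
  also have "\<dots> = ennreal (\<Sum>j. w j * prob (E j))"
    by (rule suminf_ennreal2) (simp_all add: w sm)
  finally have le: "(\<integral>\<^sup>+\<omega>. ennreal (f \<omega>) \<partial>M) \<le> ennreal (\<Sum>j. w j * prob (E j))" .
  have fin: "(\<integral>\<^sup>+\<omega>. ennreal (f \<omega>) \<partial>M) < top"
    using le_less_trans[OF le ennreal_less_top] by simp
  have int: "integrable M f"
    by (rule integrableI_nonneg[OF fm]) (simp_all add: f0 fin)
  have "ennreal (expectation f) \<le> ennreal (\<Sum>j. w j * prob (E j))"
    using le nn_integral_eq_integral[OF int] f0 by simp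
  moreover have "0 \<le> (\<Sum>j. w j * prob (E j))"
    using sm w by (intro suminf_nonneg) auto
  ultimately have "expectation f \<le> (\<Sum>j. w j * prob (E j))"
    by (simp add: ennreal_le_iff)
  with int show ?thesis by simp
qed




locale wnet = prob_space M for M :: "'a measure" +
  fixes n :: nat and g :: "nat \<Rightarrow> nat \<Rightarrow> 'a \<Rightarrow> real" and lam k :: real
  assumes ind: "indep_vars (\<lambda>_. borel) (\<lambda>(i,j). g i j) ({..<n}\<times>{..<n})"
    and cdf: "\<And>i j x. i<n \<Longrightarrow> j<n \<Longrightarrow> prob {\<omega>\<in>space M. g i j \<omega> \<le> x} = weibull_cdf lam k x"
    and gm[measurable]: "\<And>i j. g i j \<in> borel_measurable M"
    and lam: "lam > 0" and kpos: "k > 0"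
begin

lemma tail: assumes "i<n" "j<n" "0 \<le> x" shows "prob {\<omega>\<in>space M. x < g i j \<omega>} = qf lam k x"
proof -
  have ev: "{\<omega>\<in>space M. g i j \<omega> \<le> x} \<in> events" by measurable
  have "{\<omega>\<in>space M. x < g i j \<omega>} = space M - {\<omega>\<in>space M. g i j \<omega> \<le> x}" by auto
  hence "prob {\<omega>\<in>space M. x < g i j \<omega>} = 1 - prob {\<omega>\<in>space M. g i j \<omega> \<le> x}"
    using prob_compl[OF ev] by simp
  thus ?thesis using cdf[OF assms(1,2)] assms(3) by (simp add: weibull_cdf_def qf_def)
qed

lemma diag_indep: "indep_vars (\<lambda>_. borel) (\<lambda>k \<omega>. g k k \<omega>) {..<n}"
proof -
  have "indep_vars (\<lambda>_. borel) (\<lambda>j \<omega>. (\<lambda>f. f (j,j)) (restrict (\<lambda>x. (\<lambda>(i,j). g i j) x \<omega>) {(j,j)})) {..<n}"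
    by (rule indep_blocks[OF ind]) (auto simp: disjoint_family_on_def)
  moreover have "(\<lambda>j \<omega>. (\<lambda>f. f (j,j)) (restrict (\<lambda>x. (\<lambda>(i,j). g i j) x \<omega>) {(j,j)})) = (\<lambda>k \<omega>. g k k \<omega>)"
    by (auto simp: fun_eq_iff)
  ultimately show ?thesis by simp
qed

definition Zf :: "real \<Rightarrow> nat \<Rightarrow> nat \<Rightarrow> 'a \<Rightarrow> real" where
  "Zf t i kk \<omega> = (if t < g kk kk \<omega> then max 0 (g kk i \<omega>) else 0)"

definition Jf :: "real \<Rightarrow> nat \<Rightarrow> 'a \<Rightarrow> real" where
  "Jf t i \<omega> = (\<Sum>kk\<in>{..<n}-{i}. Zf t i kk \<omega>)"

lemma Zf_meas[measurable]: "Zf t i kk \<in> borel_measurable M"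
  unfolding Zf_def by measurable

lemma Jf_meas[measurable]: "Jf t i \<in> borel_measurable M"
  unfolding Jf_def by measurable

lemma Z_indep: assumes "i<n" shows "indep_vars (\<lambda>_. borel) (Zf t i) ({..<n}-{i})"
proof -
  have "indep_vars (\<lambda>_. borel) (\<lambda>j \<omega>. (\<lambda>f. if t < f (j,j) then max 0 (f (j,i)) else 0)
          (restrict (\<lambda>x. (\<lambda>(i,j). g i j) x \<omega>) {(j,j),(j,i)})) ({..<n}-{i})"
    by (rule indep_blocks[OF ind]) (use assms in \<open>auto simp: disjoint_family_on_def\<close>)
  moreover have "(\<lambda>j \<omega>. (\<lambda>f. if t < f (j,j) then max 0 (f (j,i)) else 0)
          (restrict (\<lambda>x. (\<lambda>(i,j). g i j) x \<omega>) {(j,j),(j,i)})) = Zf t i"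
    by (auto simp: fun_eq_iff Zf_def)
  ultimately show ?thesis by simp
qed

lemma J_indep: assumes "i<n"
  shows "indep_vars (\<lambda>_. borel) (\<lambda>b \<omega>. if b then g i i \<omega> else Jf t i \<omega>) UNIV"
proof -
  define K where "K = (\<lambda>b. if b then {(i,i)} else {(kk,kk)|kk. kk<n \<and> kk\<noteq>i} \<union> {(kk,i)|kk. kk<n \<and> kk\<noteq>i})"
  define h where "h = (\<lambda>b. if b then (\<lambda>f. f (i,i)) else
     (\<lambda>f. \<Sum>kk\<in>{..<n}-{i}. if t < f (kk,kk) then max 0 (f (kk,i)) else (0::real)))"
  have "indep_vars (\<lambda>_. borel) (\<lambda>j \<omega>. h j (restrict (\<lambda>x. (\<lambda>(i,j). g i j) x \<omega>) (K j))) UNIV"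
  proof (rule indep_blocks[OF ind])
    show "K j \<subseteq> {..<n} \<times> {..<n}" for j using assms by (auto simp: K_def)
    show "disjoint_family_on K UNIV" by (auto simp: disjoint_family_on_def K_def)
    show "h j \<in> borel_measurable (Pi\<^sub>M (K j) (\<lambda>_. borel))" for j
      unfolding h_def K_def by (cases j) simp_all
  qed
  moreover have "(\<lambda>j \<omega>. h j (restrict (\<lambda>x. (\<lambda>(i,j). g i j) x \<omega>) (K j))) = (\<lambda>b \<omega>. if b then g i i \<omega> else Jf t i \<omega>)"
  proof (intro ext)
    fix b \<omega>
    have m1: "(kk,kk) \<in> K False" "(kk,i) \<in> K False" if "kk < n" "kk \<noteq> i" for kk
      using that unfolding K_def by auto
    show "h b (restrict (\<lambda>x. (\<lambda>(i,j). g i j) x \<omega>) (K b)) = (if b then g i i \<omega> else Jf t i \<omega>)"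
    proof (cases b)
      case True then show ?thesis by (simp add: h_def K_def)
    next
      case False then show ?thesis
        unfolding h_def Jf_def Zf_def by (simp, intro sum.cong refl) (simp add: m1)
    qed
  qed
  ultimately show ?thesis by simp
qed


definition nu0 :: real where "nu0 = (\<Sum>j. (2*real j+1) * qf lam k (real j))"
definition mu0 :: real where "mu0 = (\<Sum>j. qf lam k (real j))"

lemma qf_nonneg: "0 \<le> qf lam k x" by (simp add: qf_def)

lemma nu0_nonneg: "0 \<le> nu0"
  unfolding nu0_def by (rule suminf_nonneg[OF summable_nu[OF kpos lam]]) (simp add: qf_nonneg)

lemma mu0_pos: "1 \<le> mu0"
proof -
  have "(\<Sum>j\<in>{0}. qf lam k (real j)) \<le> mu0"
    unfolding mu0_def by (rule sum_le_suminf[OF summable_mu[OF kpos lam]]) (simp_all add: qf_nonneg)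
  then show ?thesis using kpos by (simp add: qf_def)
qed

lemma pair_prob: assumes "kk<n" "i<n" "kk\<noteq>i"
  shows "prob {\<omega>\<in>space M. t < g kk kk \<omega> \<and> x < g kk i \<omega>} =
         prob {\<omega>\<in>space M. t < g kk kk \<omega>} * prob {\<omega>\<in>space M. x < g kk i \<omega>}"
  using indep2_prob[OF ind, of "(kk,kk)" "(kk,i)" "{t<..}" "{x<..}"] assms by simp

lemma Z_moments: assumes "kk<n" "i<n" "kk\<noteq>i" "0\<le>t"
  shows "integrable M (\<lambda>\<omega>. (Zf t i kk \<omega>)^2) \<and> expectation (\<lambda>\<omega>. (Zf t i kk \<omega>)^2) \<le> qf lam k t * nu0"
    and "integrable M (Zf t i kk) \<and> expectation (Zf t i kk) \<le> qf lam k t * mu0"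
proof -
  define E where "E j = {\<omega>\<in>space M. t < g kk kk \<omega> \<and> real j < g kk i \<omega>}" for j :: nat
  have Ev: "E j \<in> events" for j unfolding E_def by measurable
  have pE: "prob (E j) = qf lam k t * qf lam k (real j)" for j
    unfolding E_def using pair_prob[OF assms(1-3)] tail assms by simp
  have "integrable M (\<lambda>\<omega>. (Zf t i kk \<omega>)^2) \<and> expectation (\<lambda>\<omega>. (Zf t i kk \<omega>)^2) \<le> (\<Sum>j. (2*real j+1) * prob (E j))"
  proof (rule moment_bound[OF _ _ Ev])
    show "(\<lambda>\<omega>. (Zf t i kk \<omega>)^2) \<in> borel_measurable M" by measurable
    show "0 \<le> (Zf t i kk \<omega>)^2" for \<omega> by simp
    show "0 \<le> 2*real j+1" for j by simp
    show "ennreal ((Zf t i kk \<omega>)^2) \<le> (\<Sum>j. ennreal (2*real j+1) * indicator (E j) \<omega>)" if "\<omega> \<in> space M" for \<omega>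
    proof (cases "t < g kk kk \<omega>")
      case True
      have "ennreal ((Zf t i kk \<omega>)^2) = ennreal ((max 0 (g kk i \<omega>))^2)" using True by (simp add: Zf_def)
      also have "\<dots> \<le> (\<Sum>j. ennreal (2*real j+1) * indicator {x. real j < x} (g kk i \<omega>))" by (rule sq_bound)
      also have "\<dots> = (\<Sum>j. ennreal (2*real j+1) * indicator (E j) \<omega>)"
        using True that by (simp add: E_def indicator_def)
      finally show ?thesis .
    next
      case False then show ?thesis by (simp add: Zf_def)
    qed
    show "summable (\<lambda>j. (2*real j+1) * prob (E j))"
      unfolding pE using summable_mult[OF summable_nu[OF kpos lam], of "qf lam k t"] by (simp add: algebra_simps)
  qed
  moreover have "(\<Sum>j. (2*real j+1) * prob (E j)) = qf lam k t * nu0"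
    unfolding pE nu0_def using suminf_mult[OF summable_nu[OF kpos lam], of "qf lam k t"] by (simp add: algebra_simps)
  ultimately show "integrable M (\<lambda>\<omega>. (Zf t i kk \<omega>)^2) \<and> expectation (\<lambda>\<omega>. (Zf t i kk \<omega>)^2) \<le> qf lam k t * nu0"
    by simp
  have "integrable M (Zf t i kk) \<and> expectation (Zf t i kk) \<le> (\<Sum>j. 1 * prob (E j))"
  proof (rule moment_bound[OF _ _ Ev])
    show "Zf t i kk \<in> borel_measurable M" by measurable
    show "0 \<le> Zf t i kk \<omega>" for \<omega> by (simp add: Zf_def)
    show "0 \<le> (1::real)" by simp
    show "ennreal (Zf t i kk \<omega>) \<le> (\<Sum>j. ennreal 1 * indicator (E j) \<omega>)" if "\<omega> \<in> space M" for \<omega>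
    proof (cases "t < g kk kk \<omega>")
      case True
      have "ennreal (Zf t i kk \<omega>) = ennreal (max 0 (g kk i \<omega>))" using True by (simp add: Zf_def)
      also have "\<dots> \<le> (\<Sum>j. indicator {x. real j < x} (g kk i \<omega>))" by (rule lin_bound)
      also have "\<dots> = (\<Sum>j. ennreal 1 * indicator (E j) \<omega>)"
        using True that by (simp add: E_def indicator_def)
      finally show ?thesis .
    next
      case False then show ?thesis by (simp add: Zf_def)
    qed
    show "summable (\<lambda>j. 1 * prob (E j))"
      unfolding pE using summable_mult[OF summable_mu[OF kpos lam], of "qf lam k t"] by simp
  qed
  moreover have "(\<Sum>j. 1 * prob (E j)) = qf lam k t * mu0"
    unfolding pE mu0_def using suminf_mult[OF summable_mu[OF kpos lam], of "qf lam k t"] by simp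
  ultimately show "integrable M (Zf t i kk) \<and> expectation (Zf t i kk) \<le> qf lam k t * mu0"
    by simp
qed

end


context wnet begin

lemma Jf_eq: "Jf t i = (\<lambda>\<omega>. \<Sum>kk\<in>{..<n}-{i}. Zf t i kk \<omega>)"
  by (simp add: Jf_def[abs_def])

lemma J_bounds: assumes "i<n" "0\<le>t"
  shows "integrable M (\<lambda>\<omega>. (Jf t i \<omega>)^2)"
    and "expectation (Jf t i) \<le> real n * qf lam k t * mu0"
    and "variance (Jf t i) \<le> real n * qf lam k t * nu0"
proof -
  have Zm: "\<And>kk. kk \<in> {..<n}-{i} \<Longrightarrow> integrable M (\<lambda>\<omega>. (Zf t i kk \<omega>)^2) \<and> expectation (\<lambda>\<omega>. (Zf t i kk \<omega>)^2) \<le> qf lam k t * nu0"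
    "\<And>kk. kk \<in> {..<n}-{i} \<Longrightarrow> integrable M (Zf t i kk) \<and> expectation (Zf t i kk) \<le> qf lam k t * mu0"
    using Z_moments assms by auto
  have V: "integrable M (\<lambda>\<omega>. (\<Sum>kk\<in>{..<n}-{i}. Zf t i kk \<omega>)^2) \<and>
         variance (\<lambda>\<omega>. \<Sum>kk\<in>{..<n}-{i}. Zf t i kk \<omega>) = (\<Sum>kk\<in>{..<n}-{i}. variance (Zf t i kk))"
    by (rule var_sum_indep[OF _ Z_indep[OF assms(1)]]) (use Zm in auto)
  then show "integrable M (\<lambda>\<omega>. (Jf t i \<omega>)^2)" by (simp add: Jf_def)
  have cardle: "real (card ({..<n}-{i})) \<le> real n" using card_Diff1_le[of "{..<n}" i] by simp
  have "expectation (Jf t i) = (\<Sum>kk\<in>{..<n}-{i}. expectation (Zf t i kk))"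
    unfolding Jf_eq by (rule Bochner_Integration.integral_sum) (use Zm in auto)
  also have "\<dots> \<le> (\<Sum>kk\<in>{..<n}-{i}. qf lam k t * mu0)"
    by (rule sum_mono) (use Zm in auto)
  also have "\<dots> = real (card ({..<n}-{i})) * (qf lam k t * mu0)" by simp
  also have "\<dots> \<le> real n * (qf lam k t * mu0)"
    by (rule mult_right_mono[OF cardle]) (use qf_nonneg mu0_pos in auto)
  finally show "expectation (Jf t i) \<le> real n * qf lam k t * mu0" by simp
  have "variance (Jf t i) = (\<Sum>kk\<in>{..<n}-{i}. variance (Zf t i kk))"
    using V by (simp add: Jf_eq)
  also have "\<dots> \<le> (\<Sum>kk\<in>{..<n}-{i}. qf lam k t * nu0)"
  proof (rule sum_mono)
    fix kk assume kk: "kk \<in> {..<n}-{i}"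
    have i1: "integrable M (Zf t i kk)" "integrable M (\<lambda>\<omega>. (Zf t i kk \<omega>)^2)" using Zm kk by auto
    have "variance (Zf t i kk) = expectation (\<lambda>\<omega>. (Zf t i kk \<omega>)^2) - (expectation (Zf t i kk))^2"
      by (rule variance_eq[OF i1])
    also have "\<dots> \<le> expectation (\<lambda>\<omega>. (Zf t i kk \<omega>)^2)" by simp
    also have "\<dots> \<le> qf lam k t * nu0" using Zm kk by auto
    finally show "variance (Zf t i kk) \<le> qf lam k t * nu0" .
  qed
  also have "\<dots> = real (card ({..<n}-{i})) * (qf lam k t * nu0)" by simp
  also have "\<dots> \<le> real n * (qf lam k t * nu0)"
    by (rule mult_right_mono[OF cardle]) (use qf_nonneg nu0_nonneg in auto)
  finally show "variance (Jf t i) \<le> real n * qf lam k t * nu0" by simp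
qed

lemma J_tail: assumes "i<n" "0\<le>t" "u>0" "real n * qf lam k t * mu0 \<le> u/2"
  shows "prob {\<omega>\<in>space M. u < Jf t i \<omega>} \<le> 4 * (real n * qf lam k t * nu0) / u^2"
proof -
  note B = J_bounds[OF assms(1,2)]
  have "prob {\<omega>\<in>space M. u < Jf t i \<omega>} \<le> prob {\<omega>\<in>space M. u/2 \<le> \<bar>Jf t i \<omega> - expectation (Jf t i)\<bar>}"
  proof (rule finite_measure_mono)
    show "{\<omega>\<in>space M. u/2 \<le> \<bar>Jf t i \<omega> - expectation (Jf t i)\<bar>} \<in> events" by measurable
    show "{\<omega>\<in>space M. u < Jf t i \<omega>} \<subseteq> {\<omega>\<in>space M. u/2 \<le> \<bar>Jf t i \<omega> - expectation (Jf t i)\<bar>}"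
    proof safe
      fix \<omega> assume "u < Jf t i \<omega>"
      then show "u/2 \<le> \<bar>Jf t i \<omega> - expectation (Jf t i)\<bar>" using B(2) assms(4) by linarith
    qed
  qed
  also have "\<dots> \<le> variance (Jf t i) / (u/2)^2"
    by (rule Chebyshev_inequality) (use B(1) assms(3) in auto)
  also have "\<dots> \<le> (real n * qf lam k t * nu0) / (u/2)^2"
    by (rule divide_right_mono[OF B(3)]) simp
  also have "\<dots> = 4 * (real n * qf lam k t * nu0) / u^2" by (simp add: power2_eq_square field_simps)
  finally show ?thesis .
qed

lemma bad_prob: assumes "i<n" "0\<le>t"
  shows "prob {\<omega>\<in>space M. t < g i i \<omega> \<and> u < Jf t i \<omega>} = qf lam k t * prob {\<omega>\<in>space M. u < Jf t i \<omega>}"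
proof -
  have "prob {\<omega>\<in>space M. (\<lambda>b \<omega>. if b then g i i \<omega> else Jf t i \<omega>) True \<omega> \<in> {t<..} \<and>
                           (\<lambda>b \<omega>. if b then g i i \<omega> else Jf t i \<omega>) False \<omega> \<in> {u<..}} =
        prob {\<omega>\<in>space M. (\<lambda>b \<omega>. if b then g i i \<omega> else Jf t i \<omega>) True \<omega> \<in> {t<..}} *
        prob {\<omega>\<in>space M. (\<lambda>b \<omega>. if b then g i i \<omega> else Jf t i \<omega>) False \<omega> \<in> {u<..}}"
    by (rule indep2_prob[OF J_indep[OF assms(1)]]) auto
  then show ?thesis using tail[OF assms(1) assms(1) assms(2)] by simp
qed

end



lemma card_sum_real: "finite A \<Longrightarrow> real (card {x\<in>A. P x}) = (\<Sum>x\<in>A. if P x then 1 else 0)"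
  using sum.inter_filter[of A "\<lambda>_. 1::real" P] by simp

context wnet begin

lemma D_tail: assumes "0\<le>t" "0 < real n * qf lam k t"
  shows "prob {\<omega>\<in>space M. real (card {kk\<in>{..<n}. t < g kk kk \<omega>}) < real n * qf lam k t / 2}
           \<le> 4/(real n * qf lam k t)"
proof -
  define W where "W = (\<lambda>kk \<omega>. indicator {x. t < x} (g kk kk \<omega>) :: real)"
  have Wm[measurable]: "W kk \<in> borel_measurable M" for kk unfolding W_def by measurable
  have Wind: "indep_vars (\<lambda>_. borel) W {..<n}"
  proof -
    have "indep_vars (\<lambda>_. borel) (\<lambda>kk \<omega>. (\<lambda>_. indicator {x. t < x} :: real \<Rightarrow> real) kk (g kk kk \<omega>)) {..<n}"
      by (rule indep_vars_compose2[OF diag_indep]) measurable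
    then show ?thesis unfolding W_def by simp
  qed
  have W2: "(\<lambda>\<omega>. (W kk \<omega>)^2) = W kk" for kk by (auto simp: W_def indicator_def fun_eq_iff)
  have intW: "integrable M (W kk)" for kk
    by (rule integrable_const_bound[where B=1]) (auto simp: W_def indicator_def)
  have EW: "expectation (W kk) = qf lam k t" if "kk<n" for kk
  proof -
    have "expectation (W kk) = expectation (indicator {\<omega>\<in>space M. t < g kk kk \<omega>})"
      by (rule Bochner_Integration.integral_cong) (auto simp: W_def indicator_def)
    also have "\<dots> = prob {\<omega>\<in>space M. t < g kk kk \<omega>}" by (simp add: Int_absorb2 subset_eq)
    also have "\<dots> = qf lam k t" using tail that assms by simp
    finally show ?thesis .
  qed
  define S where "S = (\<lambda>\<omega>. \<Sum>kk\<in>{..<n}. W kk \<omega>)"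
  have V: "integrable M (\<lambda>\<omega>. (S \<omega>)^2) \<and> variance S = (\<Sum>kk\<in>{..<n}. variance (W kk))"
    unfolding S_def by (rule var_sum_indep[OF _ Wind]) (simp_all add: W2 intW)
  have varW: "variance (W kk) \<le> qf lam k t" if "kk<n" for kk
  proof -
    have "variance (W kk) = expectation (\<lambda>\<omega>. (W kk \<omega>)^2) - (expectation (W kk))^2"
      by (rule variance_eq) (simp_all add: W2 intW)
    also have "\<dots> \<le> expectation (\<lambda>\<omega>. (W kk \<omega>)^2)" by simp
    also have "\<dots> = qf lam k t" using EW that by (simp add: W2)
    finally show ?thesis .
  qed
  have varS: "variance S \<le> real n * qf lam k t"
  proof -
    have "variance S = (\<Sum>kk\<in>{..<n}. variance (W kk))" using V by simp
    also have "\<dots> \<le> (\<Sum>kk\<in>{..<n}. qf lam k t)" by (rule sum_mono) (simp add: varW)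
    finally have "variance S \<le> (\<Sum>kk\<in>{..<n}. qf lam k t)" .
    then show ?thesis by simp
  qed
  have ES: "expectation S = real n * qf lam k t"
  proof -
    have "expectation S = (\<Sum>kk\<in>{..<n}. expectation (W kk))"
      unfolding S_def by (rule Bochner_Integration.integral_sum) (simp add: intW)
    then show ?thesis using EW by simp
  qed
  have cardS: "real (card {kk\<in>{..<n}. t < g kk kk \<omega>}) = S \<omega>" for \<omega>
  proof -
    have e: "real (card {kk\<in>{..<n}. t < g kk kk \<omega>}) = (\<Sum>kk\<in>{..<n}. if t < g kk kk \<omega> then 1 else 0)"
      by (rule card_sum_real) simp
    show ?thesis unfolding e S_def W_def by (intro sum.cong refl) (auto simp: indicator_def)
  qed
  let ?a = "real n * qf lam k t"
  have "prob {\<omega>\<in>space M. real (card {kk\<in>{..<n}. t < g kk kk \<omega>}) < ?a / 2}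
        \<le> prob {\<omega>\<in>space M. ?a/2 \<le> \<bar>S \<omega> - expectation S\<bar>}"
  proof (rule finite_measure_mono)
    show "{\<omega>\<in>space M. ?a/2 \<le> \<bar>S \<omega> - expectation S\<bar>} \<in> events" unfolding S_def by measurable
    show "{\<omega>\<in>space M. real (card {kk\<in>{..<n}. t < g kk kk \<omega>}) < ?a / 2} \<subseteq> {\<omega>\<in>space M. ?a/2 \<le> \<bar>S \<omega> - expectation S\<bar>}"
    proof safe
      fix \<omega> assume c: "real (card {kk\<in>{..<n}. t < g kk kk \<omega>}) < ?a / 2"
      from c have "S \<omega> < ?a/2" by (simp only: cardS)
      then show "?a/2 \<le> \<bar>S \<omega> - expectation S\<bar>" using ES by (simp add: abs_if)
    qed
  qed
  also have "\<dots> \<le> variance S / (?a/2)^2"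
    by (rule Chebyshev_inequality) (use V assms in \<open>auto simp: S_def\<close>)
  also have "\<dots> \<le> ?a / (?a/2)^2"
    by (rule divide_right_mono[OF varS]) simp
  also have "\<dots> = 4 / ?a" using assms by (simp add: power2_eq_square field_simps)
  finally show ?thesis .
qed

lemma B_tail: assumes "0\<le>t" "u>0" "real n * qf lam k t * mu0 \<le> u/2" "x > 0"
  shows "prob {\<omega>\<in>space M. x \<le> real (card {i\<in>{..<n}. t < g i i \<omega> \<and> u < Jf t i \<omega>})}
     \<le> real n * qf lam k t * (4 * (real n * qf lam k t * nu0) / u^2) / x"
proof -
  define A where "A i = {\<omega>\<in>space M. t < g i i \<omega> \<and> u < Jf t i \<omega>}" for i
  have Aev[measurable]: "A i \<in> events" for i unfolding A_def by measurable
  define Bc where "Bc = (\<lambda>\<omega>. \<Sum>i\<in>{..<n}. indicator (A i) \<omega> :: real)"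
  have intB: "integrable M Bc" unfolding Bc_def
    by (intro Bochner_Integration.integrable_sum integrable_real_indicator) (auto simp: emeasure_eq_measure)
  have EB: "expectation Bc \<le> real n * qf lam k t * (4 * (real n * qf lam k t * nu0) / u^2)"
  proof -
    have "expectation Bc = (\<Sum>i\<in>{..<n}. prob (A i))"
      unfolding Bc_def by (subst Bochner_Integration.integral_sum) (auto simp: emeasure_eq_measure Int_absorb2 sets.sets_into_space)
    also have "\<dots> \<le> (\<Sum>i\<in>{..<n}. qf lam k t * (4 * (real n * qf lam k t * nu0) / u^2))"
    proof (rule sum_mono)
      fix i assume i: "i \<in> {..<n}"
      have "prob (A i) = qf lam k t * prob {\<omega>\<in>space M. u < Jf t i \<omega>}"
        unfolding A_def using bad_prob i assms by simp
      also have "\<dots> \<le> qf lam k t * (4 * (real n * qf lam k t * nu0) / u^2)"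
        by (rule mult_left_mono[OF J_tail]) (use i assms qf_nonneg in auto)
      finally show "prob (A i) \<le> qf lam k t * (4 * (real n * qf lam k t * nu0) / u^2)" .
    qed
    also have "\<dots> = real n * qf lam k t * (4 * (real n * qf lam k t * nu0) / u^2)" by simp
    finally show ?thesis .
  qed
  have cardB: "\<omega> \<in> space M \<Longrightarrow> real (card {i\<in>{..<n}. t < g i i \<omega> \<and> u < Jf t i \<omega>}) = Bc \<omega>" for \<omega>
  proof -
    have e: "real (card {i\<in>{..<n}. t < g i i \<omega> \<and> u < Jf t i \<omega>}) = (\<Sum>i\<in>{..<n}. if t < g i i \<omega> \<and> u < Jf t i \<omega> then 1 else 0)"
      by (rule card_sum_real) simp
    assume "\<omega> \<in> space M"
    then show ?thesis unfolding e Bc_def A_def by (intro sum.cong refl) (auto simp: indicator_def)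
  qed
  have "prob {\<omega>\<in>space M. x \<le> real (card {i\<in>{..<n}. t < g i i \<omega> \<and> u < Jf t i \<omega>})}
      = prob {\<omega>\<in>space M. x \<le> Bc \<omega>}"
  proof (intro arg_cong[where f=prob] Collect_cong conj_cong refl)
    fix \<omega> assume "\<omega> \<in> space M"
    then show "(x \<le> real (card {i\<in>{..<n}. t < g i i \<omega> \<and> u < Jf t i \<omega>})) = (x \<le> Bc \<omega>)"
      by (simp only: cardB)
  qed
  also have "\<dots> \<le> expectation Bc / x"
    by (rule integral_Markov_inequality_measure[OF intB, where A="space M"]) (auto simp: Bc_def assms intro!: sum_nonneg)
  also have "\<dots> \<le> real n * qf lam k t * (4 * (real n * qf lam k t * nu0) / u^2) / x"
    by (rule divide_right_mono[OF EB]) (use assms in simp)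
  finally show ?thesis .
qed

end



lemma det:
  fixes g :: "nat \<Rightarrow> nat \<Rightarrow> real"
  assumes top: "top_set n g m S" and mD: "m \<le> card {kk\<in>{..<n}. t < g kk kk}"
    and b: "\<beta> > 0" and bu: "\<beta> * (N0 + u) \<le> t"
  shows "real m - real (card {i\<in>{..<n}. t < g i i \<and> u < (\<Sum>kk\<in>{..<n}-{i}. if t < g kk kk then max 0 (g kk i) else 0)})
         \<le> real (throughput n g N0 \<beta> S)"
proof -
  define D where "D = {kk\<in>{..<n}. t < g kk kk}"
  define J where "J i = (\<Sum>kk\<in>{..<n}-{i}. if t < g kk kk then max 0 (g kk i) else 0)" for i
  define Bad where "Bad = {i\<in>{..<n}. t < g i i \<and> u < J i}"
  have Sn: "S \<subseteq> {..<n}" and cS: "card S = m" and dom: "\<And>i j. i\<in>S \<Longrightarrow> j\<in>{..<n}-S \<Longrightarrow> g j j \<le> g i i"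
    using top unfolding top_set_def by auto
  have fS: "finite S" using Sn finite_subset by blast
  have SD: "S \<subseteq> D"
  proof
    fix i assume iS: "i \<in> S"
    show "i \<in> D"
    proof (rule ccontr)
      assume "i \<notin> D"
      then have gi: "g i i \<le> t" using iS Sn unfolding D_def by auto
      have "D \<subseteq> S - {i}"
      proof
        fix j assume jD: "j \<in> D"
        then have j: "j < n" "t < g j j" unfolding D_def by auto
        have "j \<in> S"
        proof (rule ccontr)
          assume "j \<notin> S" then have "g j j \<le> g i i" using dom[OF iS] j by auto
          then show False using gi j by linarith
        qed
        moreover have "j \<noteq> i" using gi j by auto
        ultimately show "j \<in> S - {i}" by auto
      qed
      then have "card D \<le> card (S - {i})" using fS by (intro card_mono) auto
      also have "\<dots> < card S" using fS iS by (intro card_Diff1_less)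
      finally show False using mD cS unfolding D_def by simp
    qed
  qed
  have good: "S - Bad \<subseteq> {i\<in>{..<n}. success g N0 \<beta> S i}"
  proof
    fix i assume i: "i \<in> S - Bad"
    then have iS: "i \<in> S" and iD: "i \<in> D" using SD by auto
    then have gi: "t < g i i" "i < n" unfolding D_def by auto
    then have Ju: "J i \<le> u" using i unfolding Bad_def by auto
    have "interference g S i = (\<Sum>kk\<in>S-{i}. g kk i)" by (simp add: interference_def)
    also have "\<dots> \<le> (\<Sum>kk\<in>S-{i}. if t < g kk kk then max 0 (g kk i) else 0)"
    proof (rule sum_mono)
      fix kk assume "kk \<in> S - {i}"
      then have "t < g kk kk" using SD unfolding D_def by auto
      then show "g kk i \<le> (if t < g kk kk then max 0 (g kk i) else 0)" by simp
    qed
    also have "\<dots> \<le> J i" unfolding J_def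
      by (rule sum_mono2) (use Sn in auto)
    finally have "interference g S i \<le> u" using Ju by linarith
    then have "\<beta> * (N0 + interference g S i) \<le> \<beta> * (N0 + u)" using b by (intro mult_left_mono) auto
    then have "\<beta> * (N0 + interference g S i) < g i i" using bu gi by linarith
    then show "i \<in> {i\<in>{..<n}. success g N0 \<beta> S i}" using iS gi by (simp add: success_def)
  qed
  have fB: "finite Bad" unfolding Bad_def by auto
  have "card S - card Bad \<le> card (S - Bad)" by (rule diff_card_le_card_Diff[OF fB])
  also have "\<dots> \<le> throughput n g N0 \<beta> S" unfolding throughput_def
    by (rule card_mono[OF _ good]) simp
  finally have "card S - card Bad \<le> throughput n g N0 \<beta> S" .
  then have "real m - real (card Bad) \<le> real (throughput n g N0 \<beta> S)" using cS by linarith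
  then show ?thesis unfolding Bad_def J_def .
qed

lemma top_set_cong: assumes "\<And>i j. i<n \<Longrightarrow> j<n \<Longrightarrow> g i j = g' i j"
  shows "top_set n g m S = top_set n g' m S"
proof -
  have e: "(\<forall>i\<in>S. \<forall>j\<in>{..<n}-S. g j j \<le> g i i) = (\<forall>i\<in>S. \<forall>j\<in>{..<n}-S. g' j j \<le> g' i i)"
    if "S \<subseteq> {..<n}"
  proof -
    have "\<And>i. i\<in>S \<Longrightarrow> g i i = g' i i" using assms that by auto
    moreover have "\<And>j. j\<in>{..<n}-S \<Longrightarrow> g j j = g' j j" using assms by auto
    ultimately show ?thesis by auto
  qed
  show ?thesis unfolding top_set_def using e by blast
qed

lemma throughput_cong: assumes "\<And>i j. i<n \<Longrightarrow> j<n \<Longrightarrow> g i j = g' i j" "S \<subseteq> {..<n}"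
  shows "throughput n g N0 \<beta> S = throughput n g' N0 \<beta> S"
proof -
  have "success g N0 \<beta> S i = success g' N0 \<beta> S i" if "i<n" for i
  proof -
    have "interference g S i = interference g' S i"
      unfolding interference_def using assms that by (intro sum.cong) auto
    then show ?thesis unfolding success_def using assms that by auto
  qed
  then show ?thesis unfolding throughput_def by (intro arg_cong[where f=card]) auto
qed

lemma target_meas:
  fixes G :: "nat \<Rightarrow> nat \<Rightarrow> 'a \<Rightarrow> real"
  assumes [measurable]: "\<And>i j. G i j \<in> borel_measurable M"
  shows "{\<omega>\<in>space M. \<forall>S\<in>Pow {..<n}. top_set n (\<lambda>i j. G i j \<omega>) m S \<longrightarrow>
            c \<le> (\<Sum>i\<in>{..<n}. if i \<in> S \<and> G i i \<omega> > \<beta> * (N0 + (\<Sum>kk\<in>S-{i}. G kk i \<omega>)) then 1 else (0::real))} \<in> sets M"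
  unfolding top_set_def by measurable




lemma thr_sum: "real (throughput n g N0 \<beta> S) =
   (\<Sum>i\<in>{..<n}. if i \<in> S \<and> g i i > \<beta> * (N0 + (\<Sum>kk\<in>S-{i}. g kk i)) then 1 else 0)"
  unfolding throughput_def success_def interference_def by (rule card_sum_real) simp

lemma card_meas:
  fixes n :: nat and P :: "nat \<Rightarrow> 'a \<Rightarrow> bool"
  assumes "\<And>i. Measurable.pred M (P i)"
  shows "(\<lambda>\<omega>. real (card {i\<in>{..<n}. P i \<omega>})) \<in> borel_measurable M"
proof -
  have "(\<lambda>\<omega>. real (card {i\<in>{..<n}. P i \<omega>})) = (\<lambda>\<omega>. \<Sum>i\<in>{..<n}. if P i \<omega> then 1 else 0)"
    by (rule ext, rule card_sum_real, simp)
  also have "\<dots> \<in> borel_measurable M" using assms by measurable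
  finally show ?thesis .
qed

theorem corollary2:
  fixes M :: "'a measure"
    and \<gamma> :: "nat \<Rightarrow> nat \<Rightarrow> nat \<Rightarrow> 'a \<Rightarrow> real"
    and lam k N0 \<beta> :: real
  assumes "prob_space M"
    and "lam > 0"
    and "(0 < k \<and> k < 1/2) \<or> 1 \<le> k"
    and "N0 \<ge> 0"
    and "\<beta> > 0"
    and "\<And>n. prob_space.indep_vars M (\<lambda>_. borel) (\<lambda>(i, j). \<gamma> n i j) ({..<n} \<times> {..<n})"
    and "\<And>n i j x. i < n \<Longrightarrow> j < n \<Longrightarrow>
           measure M {\<omega> \<in> space M. \<gamma> n i j \<omega> \<le> x} = weibull_cdf lam k x"
  shows "\<exists>c > 0. \<exists>m :: nat \<Rightarrow> nat. (\<forall>n. m n \<le> n) \<and>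
     (\<lambda>n. measure M {\<omega> \<in> space M. \<forall>S. top_set n (\<lambda>i j. \<gamma> n i j \<omega>) (m n) S \<longrightarrow>
            real (throughput n (\<lambda>i j. \<gamma> n i j \<omega>) N0 \<beta> S) \<ge> c * ln (real n) powr (1 / k)})
     \<longlonglongrightarrow> 1"
proof -
  interpret P: prob_space M by (rule assms(1))
  have kpos: "k > 0" using assms(3) by auto
  have lam: "lam > 0" and b: "\<beta> > 0" using assms by auto
  define G where "G n i j = (if i<n \<and> j<n then \<gamma> n i j else (\<lambda>_. 0))" for n i j
  have \<gamma>m: "\<gamma> n i j \<in> borel_measurable M" if "i<n" "j<n" for n i j
  proof -
    from assms(6)[of n] have "\<forall>x\<in>{..<n}\<times>{..<n}. (\<lambda>(i,j). \<gamma> n i j) x \<in> borel_measurable M"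
      unfolding P.indep_vars_def by auto
    then show ?thesis using that by auto
  qed
  have Gm: "G n i j \<in> borel_measurable M" for n i j
    unfolding G_def using \<gamma>m by auto
  have W: "wnet M n (G n) lam k" for n
  proof (unfold_locales)
    show "P.indep_vars (\<lambda>_. borel) (\<lambda>(i, j). G n i j) ({..<n} \<times> {..<n})"
      by (rule P.indep_vars_cong[THEN iffD1, OF refl _ refl assms(6)[of n]]) (auto simp: G_def)
    show "P.prob {\<omega> \<in> space M. G n i j \<omega> \<le> x} = weibull_cdf lam k x" if "i<n" "j<n" for i j x
      using assms(7)[OF that] that by (simp add: G_def)
  qed (use Gm lam kpos in auto)
  define mu where "mu = (\<Sum>j. qf lam k (real j))"
  define nu where "nu = (\<Sum>j. (2*real j+1) * qf lam k (real j))"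
  have mu1: "1 \<le> mu" using wnet.mu0_pos[OF W] wnet.mu0_def[OF W] unfolding mu_def by simp
  have nu0: "0 \<le> nu" using wnet.nu0_nonneg[OF W] wnet.nu0_def[OF W] unfolding nu_def by simp
  define c1 where "c1 = lam * (1/2) powr (1/k)"
  have c1: "c1 > 0" unfolding c1_def using lam by simp
  define a where "a = c1 / (4 * \<beta> * mu)"
  have a: "a > 0" unfolding a_def using c1 b mu1 by simp
  define L where "L n = ln (real n) powr (1/k)" for n :: nat
  define tn where "tn n = lam * (ln (real n / (a * L n))) powr (1/k)" for n
  define un where "un n = tn n / (2 * \<beta>)" for n
  define m where "m n = min n (nat \<lfloor>a * L n / 2\<rfloor>)" for n
  define c where "c = a / 4"
  define Cst where "Cst = 128 * a * nu * \<beta>^2 / c1^2"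
  define K where "K = 4 / a + Cst"
  define target where "target n = {\<omega> \<in> space M. \<forall>S. top_set n (\<lambda>i j. \<gamma> n i j \<omega>) (m n) S \<longrightarrow>
            real (throughput n (\<lambda>i j. \<gamma> n i j \<omega>) N0 \<beta> S) \<ge> c * ln (real n) powr (1 / k)}" for n
  have ev: "eventually (\<lambda>n::nat. 2 \<le> n \<and> a * L n \<le> sqrt (real n) \<and> \<beta> * N0 \<le> c1 * L n / 2 \<and> 8 \<le> a * L n) at_top"
  proof -
    have e1: "eventually (\<lambda>n::nat. 2 \<le> n) at_top" by (rule eventually_ge_at_top)
    have e2: "eventually (\<lambda>n::nat. a * ln (real n) powr (1/k) \<le> sqrt (real n)) at_top"
      using kpos a by real_asymp
    have e3: "eventually (\<lambda>n::nat. \<beta> * N0 \<le> c1 * ln (real n) powr (1/k) / 2) at_top"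
      using kpos c1 by real_asymp
    have e4: "eventually (\<lambda>n::nat. 8 \<le> a * ln (real n) powr (1/k)) at_top"
      using kpos a by real_asymp
    show ?thesis using e1 e2 e3 e4 unfolding L_def by eventually_elim auto
  qed
  have key: "1 - K / L n \<le> measure M (target n)"
    if n2: "2 \<le> n" and hs: "a * L n \<le> sqrt (real n)" and hN: "\<beta> * N0 \<le> c1 * L n / 2" and h8: "8 \<le> a * L n"
    for n
  proof -
    interpret W: wnet M n "G n" lam k by (rule W)
    have n0: "real n > 0" using n2 by simp
    have lnpos: "ln (real n) > 0" using n2 by simp
    have Lpos: "L n > 0" unfolding L_def using lnpos by simp
    have aLpos: "a * L n > 0" using a Lpos by simp
    have sq: "sqrt (real n) * sqrt (real n) = real n" using n0 by simp
    have sqpos: "sqrt (real n) > 0" using n0 by simp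
    have ratio: "sqrt (real n) \<le> real n / (a * L n)"
    proof -
      have "sqrt (real n) * (a * L n) \<le> sqrt (real n) * sqrt (real n)"
        using hs sqpos by (intro mult_left_mono) auto
      then show ?thesis using aLpos sq by (simp add: field_simps)
    qed
    have X: "ln (real n) / 2 \<le> ln (real n / (a * L n))"
    proof -
      have "ln (sqrt (real n)) \<le> ln (real n / (a * L n))"
        using ratio sqpos aLpos n0 by (subst ln_le_cancel_iff) auto
      then show ?thesis using n0 by (simp add: ln_sqrt)
    qed
    have Xpos: "0 < ln (real n / (a * L n))" using X lnpos by linarith
    have tge: "c1 * L n \<le> tn n"
    proof -
      have "(ln (real n) / 2) powr (1/k) \<le> (ln (real n / (a * L n))) powr (1/k)"
        by (rule powr_mono2) (use X lnpos kpos in auto)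
      moreover have "(ln (real n) / 2) powr (1/k) = (1/2) powr (1/k) * L n"
        unfolding L_def using lnpos by (simp add: powr_mult[symmetric])
      ultimately show ?thesis unfolding c1_def tn_def using lam by (simp add: mult.assoc)
    qed
    have t0: "0 \<le> tn n" using tge c1 Lpos by (meson less_eq_real_def mult_pos_pos order_trans)
    have qt: "qf lam k (tn n) = a * L n / real n"
    proof -
      have "(tn n / lam) powr k = (ln (real n / (a * L n)) powr (1/k)) powr k"
        unfolding tn_def using lam by simp
      also have "\<dots> = ln (real n / (a * L n))"
        using Xpos kpos by (simp add: powr_powr)
      finally have "(tn n / lam) powr k = ln (real n / (a * L n))" .
      then have "qf lam k (tn n) = exp (- ln (real n / (a * L n)))" by (simp add: qf_def)
      also have "\<dots> = a * L n / real n" using n0 aLpos by (simp add: exp_minus)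
      finally show ?thesis .
    qed
    have np: "real n * qf lam k (tn n) = a * L n" using qt n0 by simp
    have u0: "un n > 0" unfolding un_def using tge c1 Lpos b
      by (metis divide_pos_pos mult_pos_pos order_less_le_trans zero_less_numeral)
    have amu: "a * mu = c1 / (4 * \<beta>)" unfolding a_def using mu1 b by simp
    have mu_cond: "real n * qf lam k (tn n) * W.mu0 \<le> un n / 2"
    proof -
      have "real n * qf lam k (tn n) * W.mu0 = (a * mu) * L n" using np W.mu0_def unfolding mu_def by simp
      also have "\<dots> = c1 * L n / (4 * \<beta>)" using amu by simp
      also have "\<dots> \<le> tn n / (4 * \<beta>)" using tge b by (simp add: divide_right_mono)
      also have "\<dots> = un n / 2" unfolding un_def by simp
      finally show ?thesis .
    qed
    define BadD where "BadD = {\<omega>\<in>space M. real (card {kk\<in>{..<n}. tn n < G n kk kk \<omega>}) < real n * qf lam k (tn n) / 2}"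
    define BadB where "BadB = {\<omega>\<in>space M. a * L n / 8 \<le> real (card {i\<in>{..<n}. tn n < G n i i \<omega> \<and> un n < W.Jf (tn n) i \<omega>})}"
    have PD: "P.prob BadD \<le> 4 / (a * L n)"
      using W.D_tail[OF t0] np aLpos unfolding BadD_def by simp
    have PB0: "P.prob BadB \<le> real n * qf lam k (tn n) * (4 * (real n * qf lam k (tn n) * W.nu0) / (un n)^2) / (a * L n / 8)"
      unfolding BadB_def by (rule W.B_tail[OF t0 u0 mu_cond]) (use aLpos in simp)
    have PB: "P.prob BadB \<le> Cst / L n"
    proof -
      have "real n * qf lam k (tn n) * (4 * (real n * qf lam k (tn n) * W.nu0) / (un n)^2) / (a * L n / 8)
            = 32 * (a * L n * nu) / (un n)^2"
        unfolding np using aLpos W.nu0_def unfolding nu_def by (simp add: field_simps)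
      also have "\<dots> \<le> 32 * (a * L n * nu) / (c1 * L n / (2 * \<beta>))^2"
      proof (rule divide_left_mono)
        have "c1 * L n / (2 * \<beta>) \<le> un n" unfolding un_def using tge b by (simp add: divide_right_mono)
        moreover have "0 \<le> c1 * L n / (2 * \<beta>)" using c1 Lpos b by simp
        ultimately show "(c1 * L n / (2 * \<beta>))^2 \<le> (un n)^2" by (rule power_mono)
        show "0 \<le> 32 * (a * L n * nu)" using a Lpos nu0 by simp
        show "0 < (un n)^2 * (c1 * L n / (2 * \<beta>))^2" using u0 c1 Lpos b by simp
      qed
      also have "\<dots> = Cst / L n" unfolding Cst_def using c1 Lpos b by (simp add: field_simps power2_eq_square)
      finally show ?thesis using PB0 by linarith
    qed
    have mn: "m n = nat \<lfloor>a * L n / 2\<rfloor>"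
    proof -
      have "a * L n / 2 \<le> real n"
      proof -
        have s1: "1 \<le> sqrt (real n)" using n2 by simp
        have "sqrt (real n) * 1 \<le> sqrt (real n) * sqrt (real n)"
          by (rule mult_left_mono[OF s1]) (use sqpos in simp)
        then have "sqrt (real n) \<le> real n" using sq by simp
        then show ?thesis using hs aLpos by linarith
      qed
      then have "nat \<lfloor>a * L n / 2\<rfloor> \<le> n" by linarith
      then show ?thesis unfolding m_def by simp
    qed
    have mlow: "a * L n / 2 - 1 \<le> real (m n)" unfolding mn using aLpos by linarith
    have tmeas: "target n \<in> sets M"
    proof -
      have "target n = {\<omega>\<in>space M. \<forall>S\<in>Pow {..<n}. top_set n (\<lambda>i j. G n i j \<omega>) (m n) S \<longrightarrow>
            c * ln (real n) powr (1 / k) \<le> (\<Sum>i\<in>{..<n}. if i \<in> S \<and> G n i i \<omega> > \<beta> * (N0 + (\<Sum>kk\<in>S-{i}. G n kk i \<omega>)) then 1 else (0::real))}"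
        (is "_ = ?R")
      proof -
        have eq: "\<And>\<omega> i j. i<n \<Longrightarrow> j<n \<Longrightarrow> \<gamma> n i j \<omega> = G n i j \<omega>" by (simp add: G_def)
        have "(\<forall>S. top_set n (\<lambda>i j. \<gamma> n i j \<omega>) (m n) S \<longrightarrow>
                 c * ln (real n) powr (1 / k) \<le> real (throughput n (\<lambda>i j. \<gamma> n i j \<omega>) N0 \<beta> S)) \<longleftrightarrow>
              (\<forall>S\<in>Pow {..<n}. top_set n (\<lambda>i j. G n i j \<omega>) (m n) S \<longrightarrow>
                 c * ln (real n) powr (1 / k) \<le> (\<Sum>i\<in>{..<n}. if i \<in> S \<and> G n i i \<omega> > \<beta> * (N0 + (\<Sum>kk\<in>S-{i}. G n kk i \<omega>)) then 1 else (0::real)))"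
          for \<omega>
        proof -
          have tc: "top_set n (\<lambda>i j. \<gamma> n i j \<omega>) (m n) S = top_set n (\<lambda>i j. G n i j \<omega>) (m n) S" for S
            by (rule top_set_cong) (simp add: eq)
          have thc: "real (throughput n (\<lambda>i j. \<gamma> n i j \<omega>) N0 \<beta> S) =
              (\<Sum>i\<in>{..<n}. if i \<in> S \<and> G n i i \<omega> > \<beta> * (N0 + (\<Sum>kk\<in>S-{i}. G n kk i \<omega>)) then 1 else (0::real))"
            if "S \<subseteq> {..<n}" for S
            using throughput_cong[of n "\<lambda>i j. \<gamma> n i j \<omega>" "\<lambda>i j. G n i j \<omega>" S N0 \<beta>] eq that
              thr_sum[of n "\<lambda>i j. G n i j \<omega>" N0 \<beta> S] by simp
          show ?thesis
          proof
            assume A: "\<forall>S. top_set n (\<lambda>i j. \<gamma> n i j \<omega>) (m n) S \<longrightarrow>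
                 c * ln (real n) powr (1 / k) \<le> real (throughput n (\<lambda>i j. \<gamma> n i j \<omega>) N0 \<beta> S)"
            show "\<forall>S\<in>Pow {..<n}. top_set n (\<lambda>i j. G n i j \<omega>) (m n) S \<longrightarrow>
                 c * ln (real n) powr (1 / k) \<le> (\<Sum>i\<in>{..<n}. if i \<in> S \<and> G n i i \<omega> > \<beta> * (N0 + (\<Sum>kk\<in>S-{i}. G n kk i \<omega>)) then 1 else (0::real))"
            proof (intro ballI impI)
              fix S assume "S \<in> Pow {..<n}" "top_set n (\<lambda>i j. G n i j \<omega>) (m n) S"
              then show "c * ln (real n) powr (1 / k) \<le> (\<Sum>i\<in>{..<n}. if i \<in> S \<and> G n i i \<omega> > \<beta> * (N0 + (\<Sum>kk\<in>S-{i}. G n kk i \<omega>)) then 1 else (0::real))"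
                using A tc thc[of S] by auto
            qed
          next
            assume A: "\<forall>S\<in>Pow {..<n}. top_set n (\<lambda>i j. G n i j \<omega>) (m n) S \<longrightarrow>
                 c * ln (real n) powr (1 / k) \<le> (\<Sum>i\<in>{..<n}. if i \<in> S \<and> G n i i \<omega> > \<beta> * (N0 + (\<Sum>kk\<in>S-{i}. G n kk i \<omega>)) then 1 else (0::real))"
            show "\<forall>S. top_set n (\<lambda>i j. \<gamma> n i j \<omega>) (m n) S \<longrightarrow>
                 c * ln (real n) powr (1 / k) \<le> real (throughput n (\<lambda>i j. \<gamma> n i j \<omega>) N0 \<beta> S)"
            proof (intro allI impI)
              fix S assume ts: "top_set n (\<lambda>i j. \<gamma> n i j \<omega>) (m n) S"
              then have Sn: "S \<subseteq> {..<n}" unfolding top_set_def by simp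
              then show "c * ln (real n) powr (1 / k) \<le> real (throughput n (\<lambda>i j. \<gamma> n i j \<omega>) N0 \<beta> S)"
                using A ts tc thc[OF Sn] by auto
            qed
          qed
        qed
        then show ?thesis unfolding target_def by blast
      qed
      also have "?R \<in> sets M" by (rule target_meas[OF Gm])
      finally show ?thesis .
    qed
    have sub: "space M - (BadD \<union> BadB) \<subseteq> target n"
    proof
      fix \<omega> assume \<omega>: "\<omega> \<in> space M - (BadD \<union> BadB)"
      then have sp: "\<omega> \<in> space M" by simp
      have hD: "a * L n / 2 \<le> real (card {kk\<in>{..<n}. tn n < G n kk kk \<omega>})"
        using \<omega> np unfolding BadD_def by auto
      have hB: "real (card {i\<in>{..<n}. tn n < G n i i \<omega> \<and> un n < W.Jf (tn n) i \<omega>}) < a * L n / 8"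
        using \<omega> unfolding BadB_def by auto
      have eq: "\<And>i j. i<n \<Longrightarrow> j<n \<Longrightarrow> \<gamma> n i j \<omega> = G n i j \<omega>" by (simp add: G_def)
      have mD: "m n \<le> card {kk\<in>{..<n}. tn n < G n kk kk \<omega>}" unfolding mn using hD by linarith
      have bu: "\<beta> * (N0 + un n) \<le> tn n"
      proof -
        have "\<beta> * (N0 + un n) = \<beta> * N0 + tn n / 2" unfolding un_def using b by (simp add: field_simps)
        then show ?thesis using hN tge by linarith
      qed
      have "\<forall>S. top_set n (\<lambda>i j. \<gamma> n i j \<omega>) (m n) S \<longrightarrow>
            real (throughput n (\<lambda>i j. \<gamma> n i j \<omega>) N0 \<beta> S) \<ge> c * ln (real n) powr (1 / k)"
      proof (intro allI impI)
        fix S assume ts: "top_set n (\<lambda>i j. \<gamma> n i j \<omega>) (m n) S"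
        then have Sn: "S \<subseteq> {..<n}" unfolding top_set_def by simp
        have tsG: "top_set n (\<lambda>i j. G n i j \<omega>) (m n) S"
          using ts top_set_cong[of n "\<lambda>i j. \<gamma> n i j \<omega>" "\<lambda>i j. G n i j \<omega>"] eq by simp
        have thr: "throughput n (\<lambda>i j. \<gamma> n i j \<omega>) N0 \<beta> S = throughput n (\<lambda>i j. G n i j \<omega>) N0 \<beta> S"
          by (rule throughput_cong[OF _ Sn]) (simp add: eq)
        have d: "real (m n) - real (card {i\<in>{..<n}. tn n < G n i i \<omega> \<and> un n < (\<Sum>kk\<in>{..<n}-{i}. if tn n < G n kk kk \<omega> then max 0 (G n kk i \<omega>) else 0)})
             \<le> real (throughput n (\<lambda>i j. G n i j \<omega>) N0 \<beta> S)"
          by (rule det[OF tsG mD b bu])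
        have "W.Jf (tn n) i \<omega> = (\<Sum>kk\<in>{..<n}-{i}. if tn n < G n kk kk \<omega> then max 0 (G n kk i \<omega>) else 0)" for i
          by (simp add: W.Jf_def W.Zf_def)
        then have "real (m n) - a * L n / 8 \<le> real (throughput n (\<lambda>i j. G n i j \<omega>) N0 \<beta> S)"
          using d hB by simp
        moreover have "c * ln (real n) powr (1 / k) = a * L n / 4" unfolding c_def L_def by simp
        ultimately show "real (throughput n (\<lambda>i j. \<gamma> n i j \<omega>) N0 \<beta> S) \<ge> c * ln (real n) powr (1 / k)"
          using thr mlow h8 by linarith
      qed
      then show "\<omega> \<in> target n" unfolding target_def using sp by blast
    qed
    have f1[measurable]: "(\<lambda>\<omega>. real (card {kk\<in>{..<n}. tn n < G n kk kk \<omega>})) \<in> borel_measurable M"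
      by (rule card_meas) (use Gm in measurable)
    have f2[measurable]: "(\<lambda>\<omega>. real (card {i\<in>{..<n}. tn n < G n i i \<omega> \<and> un n < W.Jf (tn n) i \<omega>})) \<in> borel_measurable M"
      by (rule card_meas) (use Gm in measurable)
    have BDev: "BadD \<in> sets M" unfolding BadD_def by measurable
    have BBev: "BadB \<in> sets M" unfolding BadB_def by measurable
    have "1 - K / L n = 1 - (4 / (a * L n) + Cst / L n)"
      unfolding K_def using a Lpos by (simp add: field_simps)
    also have "\<dots> \<le> 1 - (P.prob BadD + P.prob BadB)" using PD PB by linarith
    also have "\<dots> \<le> 1 - P.prob (BadD \<union> BadB)"
      using measure_Un_le[OF BDev BBev] by linarith
    also have "\<dots> = P.prob (space M - (BadD \<union> BadB))"
      using P.prob_compl[OF sets.Un[OF BDev BBev]] by simp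
    also have "\<dots> \<le> P.prob (target n)"
      by (rule P.finite_measure_mono[OF sub tmeas])
    finally show ?thesis .
  qed
  have lim: "(\<lambda>n. 1 - K / L n) \<longlonglongrightarrow> 1"
    unfolding L_def using kpos by real_asymp
  have "(\<lambda>n. measure M (target n)) \<longlonglongrightarrow> 1"
  proof (rule tendsto_sandwich[OF _ _ lim tendsto_const])
    show "eventually (\<lambda>n. 1 - K / L n \<le> measure M (target n)) sequentially"
      using ev by eventually_elim (use key in auto)
    show "eventually (\<lambda>n. measure M (target n) \<le> 1) sequentially" by simp
  qed
  moreover have "c > 0" using a unfolding c_def by simp
  moreover have "\<forall>n. m n \<le> n" unfolding m_def by simp
  ultimately show ?thesis unfolding target_def by blast
qed


end
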